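(* Let $G+v$ be a graph with an isolated vertex $v$, and let $G$ be the graph obtained from $G+v$ by deleting $v$. Then $\lfloor \mathrm{sp}\rfloor(G+v)=\lfloor \mathrm{sp}\rfloor(G)$. Moreover, if $G$ is a minor of a graph $H$ and $\lfloor \mathrm{sp}\rfloor(G)=\mathrm{sp}(H)$, then there is a graph $H^+$, with exactly one more vertex than $H$, such that $\lfloor \mathrm{sp}\rfloor(G+v)=\mathrm{sp}(H^+)$ and $G+v$ is a minor of $H^+$.
   Context: All graphs are finite, have at least one vertex, have no loops, and may have multiple (parallel) edges. A unique shortest path is a shortest $u$–$v$ path $P$ such that every $u$–$v$ path with the same number of vertices is identical to $P$, where two paths with different edge sequences are different even if their vertex sequences agree; a single vertex is a unique shortest path. The parade number $\mathrm{usp}(G)$ is the largest number of vertices of a unique shortest path in $G$. The spectator number is $\mathrm{sp}(G)=|V(G)|-\mathrm{usp}(G)$. A minor of $H$ is any graph obtained from $H$ by a sequence of: deleting an isolated vertex, deleting an edge, contracting an edge that has no edge parallel to it. The spectator floor $\lfloor \mathrm{sp}\rfloor(G)$ is the minimum of $\mathrm{sp}(H)$ over all graphs $H$ of which $G$ is a minor. *)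

theory Defs
  imports Main
begin

text \<open>Finite multigraphs without loops: a vertex set, an edge set, and for each edge
  its set of two distinct end vertices. Parallel edges are distinct edge names with
  the same ends.\<close>

record ('v, 'e) mgraph =
  verts :: "'v set"
  edges :: "'e set"
  ends  :: "'e \<Rightarrow> 'v set"

definition is_graph :: "('v, 'e) mgraph \<Rightarrow> bool" where
  "is_graph G \<longleftrightarrow> finite (verts G) \<and> verts G \<noteq> {} \<and> finite (edges G) \<and>
     (\<forall>e\<in>edges G. ends G e \<subseteq> verts G \<and> card (ends G e) = 2)"

definition is_path :: "('v, 'e) mgraph \<Rightarrow> 'v list \<Rightarrow> 'e list \<Rightarrow> bool" where
  "is_path G vs es \<longleftrightarrow> vs \<noteq> [] \<and> length vs = Suc (length es) \<and> distinct vs \<and>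
     set vs \<subseteq> verts G \<and> set es \<subseteq> edges G \<and>
     (\<forall>i < length es. ends G (es ! i) = {vs ! i, vs ! Suc i})"

definition is_usp :: "('v, 'e) mgraph \<Rightarrow> 'v list \<Rightarrow> 'e list \<Rightarrow> bool" where
  "is_usp G vs es \<longleftrightarrow> is_path G vs es \<and>
     (\<forall>vs' es'. is_path G vs' es' \<and> hd vs' = hd vs \<and> last vs' = last vs \<longrightarrow>
        length vs \<le> length vs') \<and>
     (\<forall>vs' es'. is_path G vs' es' \<and> hd vs' = hd vs \<and> last vs' = last vs \<and>
        length vs' = length vs \<longrightarrow> vs' = vs \<and> es' = es)"

definition usp :: "('v, 'e) mgraph \<Rightarrow> nat" where
  "usp G = Max {length vs | vs es. is_usp G vs es}"

definition sp :: "('v, 'e) mgraph \<Rightarrow> nat" where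
  "sp G = card (verts G) - usp G"

definition isolated :: "('v, 'e) mgraph \<Rightarrow> 'v \<Rightarrow> bool" where
  "isolated G x \<longleftrightarrow> x \<in> verts G \<and> (\<forall>e\<in>edges G. x \<notin> ends G e)"

definition del_vertex :: "('v, 'e) mgraph \<Rightarrow> 'v \<Rightarrow> ('v, 'e) mgraph" where
  "del_vertex G x = G\<lparr>verts := verts G - {x}\<rparr>"

definition del_edge :: "('v, 'e) mgraph \<Rightarrow> 'e \<Rightarrow> ('v, 'e) mgraph" where
  "del_edge G e = G\<lparr>edges := edges G - {e}\<rparr>"

definition contract :: "('v, 'e) mgraph \<Rightarrow> 'e \<Rightarrow> 'v \<Rightarrow> 'v \<Rightarrow> ('v, 'e) mgraph" where
  "contract G e a b =
     \<lparr>verts = verts G - {b}, edges = edges G - {e},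
      ends = (\<lambda>f. (\<lambda>x. if x = b then a else x) ` ends G f)\<rparr>"

inductive minor_step :: "('v, 'e) mgraph \<Rightarrow> ('v, 'e) mgraph \<Rightarrow> bool" where
  del_iso: "isolated H x \<Longrightarrow> minor_step H (del_vertex H x)"
| del_e: "e \<in> edges H \<Longrightarrow> minor_step H (del_edge H e)"
| contr: "e \<in> edges H \<Longrightarrow> ends H e = {a, b} \<Longrightarrow> a \<noteq> b \<Longrightarrow>
     (\<forall>f\<in>edges H. f \<noteq> e \<longrightarrow> ends H f \<noteq> ends H e) \<Longrightarrow>
     minor_step H (contract H e a b)"

definition graph_iso :: "('v, 'e) mgraph \<Rightarrow> ('w, 'f) mgraph \<Rightarrow> bool" where
  "graph_iso G H \<longleftrightarrow> (\<exists>f g. bij_betw f (verts G) (verts H) \<and> bij_betw g (edges G) (edges H) \<and>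
     (\<forall>e\<in>edges G. ends H (g e) = f ` ends G e))"

definition is_minor :: "('v, 'e) mgraph \<Rightarrow> ('w, 'f) mgraph \<Rightarrow> bool" where
  "is_minor G H \<longleftrightarrow> (\<exists>H'. minor_step\<^sup>*\<^sup>* H H' \<and> graph_iso H' G)"

text \<open>Spectator floor: minimum of sp(H) over all graphs H having G as a minor.
  Every finite graph is isomorphic to one on natural-number vertices and edges,
  so it suffices to range over such H.\<close>
definition spfloor :: "('v, 'e) mgraph \<Rightarrow> nat" where
  "spfloor G = Inf {sp H | H :: (nat, nat) mgraph. is_graph H \<and> is_minor G H}"

end

theory Submission
  imports Defs
begin

definition add_iso :: "('v, 'e) mgraph \<Rightarrow> 'v \<Rightarrow> ('v, 'e) mgraph" where
  "add_iso G x = G\<lparr>verts := insert x (verts G)\<rparr>"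

definition RelW :: "('a,'b) mgraph \<Rightarrow> ('c,'d) mgraph \<Rightarrow> 'c \<Rightarrow> bool" where
 "RelW H1 H2 w \<longleftrightarrow> w \<in> verts H2 \<and> (\<forall>e\<in>edges H1. ends H1 e \<subseteq> verts H1) \<and>
   (\<exists>f g. bij_betw f (verts H1) (verts H2 - {w}) \<and> bij_betw g (edges H1) (edges H2) \<and>
      (\<forall>e\<in>edges H1. ends H2 (g e) = f ` ends H1 e))"

lemma bij_minus1: "bij_betw f A B \<Longrightarrow> x \<in> A \<Longrightarrow> bij_betw f (A - {x}) (B - {f x})"
  by (rule bij_betw_DiffI) (auto simp: bij_betw_def)

lemma sim_step:
  assumes "minor_step H1 H1'" "RelW H1 H2 w"
  shows "\<exists>H2'. minor_step H2 H2' \<and> RelW H1' H2' w"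
  using assms(1)
proof cases
  case (del_iso x)
  from assms(2) obtain f g where w: "w \<in> verts H2" and sub: "\<forall>e\<in>edges H1. ends H1 e \<subseteq> verts H1"
    and f: "bij_betw f (verts H1) (verts H2 - {w})" and g: "bij_betw g (edges H1) (edges H2)"
    and en: "\<forall>e\<in>edges H1. ends H2 (g e) = f ` ends H1 e" unfolding RelW_def by blast
  have x: "x \<in> verts H1" "\<forall>e\<in>edges H1. x \<notin> ends H1 e" using del_iso(2) by (auto simp: isolated_def)
  have inj: "inj_on f (verts H1)" using f by (auto simp: bij_betw_def)
  have fx: "f x \<in> verts H2 - {w}" using f x by (auto simp: bij_betw_def)
  have "isolated H2 (f x)"
    unfolding isolated_def
  proof (intro conjI ballI)
    show "f x \<in> verts H2" using fx by auto
    fix e2 assume "e2 \<in> edges H2"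
    then obtain e where e: "e \<in> edges H1" "e2 = g e" using g by (auto simp: bij_betw_def)
    show "f x \<notin> ends H2 e2"
    proof
      assume "f x \<in> ends H2 e2"
      then obtain y where "y \<in> ends H1 e" "f y = f x" using e en by auto
      moreover have "y \<in> verts H1" using sub e `y \<in> ends H1 e` by auto
      ultimately have "y = x" using inj x by (auto dest: inj_onD)
      with x e `y \<in> ends H1 e` show False by auto
    qed
  qed
  hence "minor_step H2 (del_vertex H2 (f x))" by (rule minor_step.del_iso)
  moreover have "RelW H1' (del_vertex H2 (f x)) w"
    unfolding RelW_def
  proof (intro conjI exI)
    show "w \<in> verts (del_vertex H2 (f x))" using w fx by (auto simp: del_vertex_def)
    show "\<forall>e\<in>edges H1'. ends H1' e \<subseteq> verts H1'" using sub x del_iso(1) by (auto simp: del_vertex_def)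
    have "bij_betw f (verts H1 - {x}) (verts H2 - {w} - {f x})" using bij_minus1[OF f x(1)] .
    moreover have "verts H2 - {w} - {f x} = verts (del_vertex H2 (f x)) - {w}" by (auto simp: del_vertex_def)
    ultimately show "bij_betw f (verts H1') (verts (del_vertex H2 (f x)) - {w})"
      using del_iso(1) by (simp add: del_vertex_def)
    show "bij_betw g (edges H1') (edges (del_vertex H2 (f x)))" using g del_iso(1) by (simp add: del_vertex_def)
    show "\<forall>e\<in>edges H1'. ends (del_vertex H2 (f x)) (g e) = f ` ends H1' e" using en del_iso(1) by (simp add: del_vertex_def)
  qed
  ultimately show ?thesis by blast
next
  case (del_e e)
  from assms(2) obtain f g where w: "w \<in> verts H2" and sub: "\<forall>e\<in>edges H1. ends H1 e \<subseteq> verts H1"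
    and f: "bij_betw f (verts H1) (verts H2 - {w})" and g: "bij_betw g (edges H1) (edges H2)"
    and en: "\<forall>e\<in>edges H1. ends H2 (g e) = f ` ends H1 e" unfolding RelW_def by blast
  have ge: "g e \<in> edges H2" using g del_e(2) by (auto simp: bij_betw_def)
  hence "minor_step H2 (del_edge H2 (g e))" by (rule minor_step.del_e)
  moreover have "RelW H1' (del_edge H2 (g e)) w"
    unfolding RelW_def
  proof (intro conjI exI)
    show "w \<in> verts (del_edge H2 (g e))" using w by (auto simp: del_edge_def)
    show "\<forall>e\<in>edges H1'. ends H1' e \<subseteq> verts H1'" using sub del_e(1) by (auto simp: del_edge_def)
    show "bij_betw f (verts H1') (verts (del_edge H2 (g e)) - {w})" using f del_e(1) by (simp add: del_edge_def)
    show "bij_betw g (edges H1') (edges (del_edge H2 (g e)))" using bij_minus1[OF g del_e(2)] del_e(1) by (simp add: del_edge_def)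
    show "\<forall>e'\<in>edges H1'. ends (del_edge H2 (g e)) (g e') = f ` ends H1' e'" using en del_e(1) by (simp add: del_edge_def)
  qed
  ultimately show ?thesis by blast
next
  case (contr e a b)
  from assms(2) obtain f g where w: "w \<in> verts H2" and sub: "\<forall>e\<in>edges H1. ends H1 e \<subseteq> verts H1"
    and f: "bij_betw f (verts H1) (verts H2 - {w})" and g: "bij_betw g (edges H1) (edges H2)"
    and en: "\<forall>e\<in>edges H1. ends H2 (g e) = f ` ends H1 e" unfolding RelW_def by blast
  have inj: "inj_on f (verts H1)" using f by (auto simp: bij_betw_def)
  have injg: "inj_on g (edges H1)" using g by (auto simp: bij_betw_def)
  have ab: "a \<in> verts H1" "b \<in> verts H1" using sub contr by auto
  have fab: "f a \<noteq> f b" using inj ab contr(4) by (auto dest: inj_onD)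
  have fb: "f b \<in> verts H2 - {w}" using f ab by (auto simp: bij_betw_def)
  have ge: "g e \<in> edges H2" using g contr(2) by (auto simp: bij_betw_def)
  have gends: "ends H2 (g e) = {f a, f b}" using en contr by auto
  have par: "\<forall>h\<in>edges H2. h \<noteq> g e \<longrightarrow> ends H2 h \<noteq> ends H2 (g e)"
  proof (intro ballI impI)
    fix h assume h: "h \<in> edges H2" "h \<noteq> g e"
    then obtain e' where e': "e' \<in> edges H1" "h = g e'" using g by (auto simp: bij_betw_def)
    with h have "e' \<noteq> e" by auto
    hence "ends H1 e' \<noteq> ends H1 e" using contr(5) e' by auto
    hence "f ` ends H1 e' \<noteq> f ` ends H1 e" using inj_on_image_eq_iff[OF inj] sub e' contr(2) by metis
    thus "ends H2 h \<noteq> ends H2 (g e)" using en e' contr(2) by auto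
  qed
  have "minor_step H2 (contract H2 (g e) (f a) (f b))"
    by (rule minor_step.contr[OF ge gends fab par])
  moreover have "RelW H1' (contract H2 (g e) (f a) (f b)) w"
    unfolding RelW_def
  proof (intro conjI exI)
    show "w \<in> verts (contract H2 (g e) (f a) (f b))" using w fb by (auto simp: contract_def)
    show "\<forall>e\<in>edges H1'. ends H1' e \<subseteq> verts H1'" using sub contr ab by (auto simp: contract_def)
    have "bij_betw f (verts H1 - {b}) (verts H2 - {w} - {f b})" using bij_minus1[OF f ab(2)] .
    moreover have "verts H2 - {w} - {f b} = verts (contract H2 (g e) (f a) (f b)) - {w}" by (auto simp: contract_def)
    ultimately show "bij_betw f (verts H1') (verts (contract H2 (g e) (f a) (f b)) - {w})"
      using contr(1) by (simp add: contract_def)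
    show "bij_betw g (edges H1') (edges (contract H2 (g e) (f a) (f b)))"
      using bij_minus1[OF g contr(2)] contr(1) by (simp add: contract_def)
    show "\<forall>e'\<in>edges H1'. ends (contract H2 (g e) (f a) (f b)) (g e') = f ` ends H1' e'"
    proof
      fix e' assume "e' \<in> edges H1'"
      hence e': "e' \<in> edges H1" using contr(1) by (auto simp: contract_def)
      have "ends (contract H2 (g e) (f a) (f b)) (g e') = (\<lambda>x. if x = f b then f a else x) ` f ` ends H1 e'"
        using en e' by (simp add: contract_def)
      also have "\<dots> = f ` (\<lambda>x. if x = b then a else x) ` ends H1 e'"
        unfolding image_image
      proof (rule image_cong[OF refl])
        fix x assume "x \<in> ends H1 e'"
        hence "x \<in> verts H1" using sub e' by auto
        thus "(if f x = f b then f a else f x) = f (if x = b then a else x)"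
          using inj ab by (auto dest: inj_onD)
      qed
      finally show "ends (contract H2 (g e) (f a) (f b)) (g e') = f ` ends H1' e'"
        using contr(1) by (simp add: contract_def)
    qed
  qed
  ultimately show ?thesis by blast
qed

lemma sim_steps:
  assumes "minor_step\<^sup>*\<^sup>* H1 H1'" "RelW H1 H2 w"
  shows "\<exists>H2'. minor_step\<^sup>*\<^sup>* H2 H2' \<and> RelW H1' H2' w"
  using assms
proof (induction rule: rtranclp_induct)
  case base thus ?case by blast
next
  case (step y z)
  then obtain H2' where "minor_step\<^sup>*\<^sup>* H2 H2'" "RelW y H2' w" by blast
  with sim_step[OF step(2) this(2)] show ?case by (meson rtranclp.rtrancl_into_rtrancl)
qed


lemma bij_inv1: "bij_betw g A B \<Longrightarrow> y \<in> B \<Longrightarrow> the_inv_into A g y \<in> A \<and> g (the_inv_into A g y) = y"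
  by (metis bij_betw_def f_the_inv_into_f_bij_betw the_inv_into_into order_refl)

lemma bij_inv2: "bij_betw g A B \<Longrightarrow> x \<in> A \<Longrightarrow> the_inv_into A g (g x) = x"
  by (simp add: bij_betw_def the_inv_into_f_f)

lemma iso_final:
  assumes R: "RelW H1 H2 w" and I: "graph_iso H1 G" and v: "v \<notin> verts G"
  shows "graph_iso H2 (add_iso G v)"
proof -
  from R obtain f g where w: "w \<in> verts H2" and sub: "\<forall>e\<in>edges H1. ends H1 e \<subseteq> verts H1"
    and f: "bij_betw f (verts H1) (verts H2 - {w})" and g: "bij_betw g (edges H1) (edges H2)"
    and en: "\<forall>e\<in>edges H1. ends H2 (g e) = f ` ends H1 e" unfolding RelW_def by blast
  from I obtain p q where p: "bij_betw p (verts H1) (verts G)" and q: "bij_betw q (edges H1) (edges G)"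
    and eq: "\<forall>e\<in>edges H1. ends G (q e) = p ` ends H1 e" unfolding graph_iso_def by blast
  define fi where "fi = the_inv_into (verts H1) f"
  define gi where "gi = the_inv_into (edges H1) g"
  have fi: "bij_betw fi (verts H2 - {w}) (verts H1)" unfolding fi_def by (rule bij_betw_the_inv_into[OF f])
  have gi: "bij_betw gi (edges H2) (edges H1)" unfolding gi_def by (rule bij_betw_the_inv_into[OF g])
  define F where "F = (\<lambda>y. if y = w then v else p (fi y))"
  define Q where "Q = q \<circ> gi"
  have b1: "bij_betw (p \<circ> fi) (verts H2 - {w}) (verts G)" using bij_betw_trans[OF fi p] .
  have b2: "bij_betw F (verts H2 - {w}) (verts G)"
  proof -
    have "bij_betw F (verts H2 - {w}) (verts G) = bij_betw (p \<circ> fi) (verts H2 - {w}) (verts G)"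
      by (rule bij_betw_cong) (simp add: F_def)
    thus ?thesis using b1 by simp
  qed
  have "bij_betw F ((verts H2 - {w}) \<union> {w}) (verts G \<union> {F w})"
    by (rule notIn_Un_bij_betw) (use b2 v in \<open>auto simp: F_def\<close>)
  moreover have "(verts H2 - {w}) \<union> {w} = verts H2" using w by blast
  moreover have "verts G \<union> {F w} = verts (add_iso G v)" by (auto simp: add_iso_def F_def)
  ultimately have bF: "bij_betw F (verts H2) (verts (add_iso G v))" by simp
  have bQ: "bij_betw Q (edges H2) (edges (add_iso G v))" unfolding Q_def add_iso_def
    using bij_betw_trans[OF gi q] by simp
  have "\<forall>e2\<in>edges H2. ends (add_iso G v) (Q e2) = F ` ends H2 e2"
  proof
    fix e2 assume e2: "e2 \<in> edges H2"
    define e where "e = gi e2"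
    have e: "e \<in> edges H1" "g e = e2" unfolding e_def gi_def using bij_inv1[OF g e2] by auto
    have "F ` ends H2 e2 = F ` f ` ends H1 e" using en e by auto
    also have "\<dots> = p ` ends H1 e" unfolding image_image
    proof (rule image_cong[OF refl])
      fix x assume "x \<in> ends H1 e"
      hence x: "x \<in> verts H1" using sub e by auto
      hence "f x \<in> verts H2 - {w}" using f by (auto simp: bij_betw_def)
      moreover have "fi (f x) = x" unfolding fi_def using bij_inv2[OF f x] .
      ultimately show "F (f x) = p x" by (auto simp: F_def)
    qed
    also have "\<dots> = ends (add_iso G v) (Q e2)" using eq e by (simp add: Q_def add_iso_def e_def)
    finally show "ends (add_iso G v) (Q e2) = F ` ends H2 e2" by simp
  qed
  thus ?thesis unfolding graph_iso_def using bF bQ by blast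
qed

lemma minor_del:
  assumes M: "is_minor Gv H" and iso: "isolated Gv v"
  shows "is_minor (del_vertex Gv v) H"
proof -
  from M obtain H1 where s: "minor_step\<^sup>*\<^sup>* H H1" and I: "graph_iso H1 Gv" unfolding is_minor_def by blast
  from I obtain p q where p: "bij_betw p (verts H1) (verts Gv)" and q: "bij_betw q (edges H1) (edges Gv)"
    and eq: "\<forall>e\<in>edges H1. ends Gv (q e) = p ` ends H1 e" unfolding graph_iso_def by blast
  have "v \<in> verts Gv" using iso by (simp add: isolated_def)
  then obtain x where x: "x \<in> verts H1" "p x = v" using p by (metis bij_betw_imp_surj_on imageE)
  have "isolated H1 x" unfolding isolated_def
  proof (intro conjI ballI)
    show "x \<in> verts H1" by (rule x(1))
  next
    fix e assume e: "e \<in> edges H1"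
    have "q e \<in> edges Gv" using q e by (auto simp: bij_betw_def)
    hence "v \<notin> ends Gv (q e)" using iso by (auto simp: isolated_def)
    show "x \<notin> ends H1 e"
    proof
      assume "x \<in> ends H1 e"
      hence "v \<in> p ` ends H1 e" using x(2) by blast
      thus False using eq e \<open>v \<notin> ends Gv (q e)\<close> by simp
    qed
  qed
  hence "minor_step H1 (del_vertex H1 x)" by (rule minor_step.del_iso)
  with s have s2: "minor_step\<^sup>*\<^sup>* H (del_vertex H1 x)" by (rule rtranclp.rtrancl_into_rtrancl)
  have "graph_iso (del_vertex H1 x) (del_vertex Gv v)" unfolding graph_iso_def
  proof (intro exI conjI)
    show "bij_betw p (verts (del_vertex H1 x)) (verts (del_vertex Gv v))"
      using bij_minus1[OF p x(1)] x(2) by (simp add: del_vertex_def)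
    show "bij_betw q (edges (del_vertex H1 x)) (edges (del_vertex Gv v))"
      using q by (simp add: del_vertex_def)
    show "\<forall>e\<in>edges (del_vertex H1 x). ends (del_vertex Gv v) (q e) = p ` ends (del_vertex H1 x) e"
      using eq by (simp add: del_vertex_def)
  qed
  thus ?thesis using s2 unfolding is_minor_def by blast
qed

lemma iso_sym:
  assumes I: "graph_iso A B" and sub: "\<forall>e\<in>edges A. ends A e \<subseteq> verts A"
  shows "graph_iso B A"
proof -
  from I obtain p q where p: "bij_betw p (verts A) (verts B)" and q: "bij_betw q (edges A) (edges B)"
    and eq: "\<forall>e\<in>edges A. ends B (q e) = p ` ends A e" unfolding graph_iso_def by blast
  define pi where "pi = the_inv_into (verts A) p"
  define qi where "qi = the_inv_into (edges A) q"
  have pi: "bij_betw pi (verts B) (verts A)" unfolding pi_def by (rule bij_betw_the_inv_into[OF p])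
  have qi: "bij_betw qi (edges B) (edges A)" unfolding qi_def by (rule bij_betw_the_inv_into[OF q])
  have "\<forall>e2\<in>edges B. ends A (qi e2) = pi ` ends B e2"
  proof
    fix e2 assume e2: "e2 \<in> edges B"
    have e: "qi e2 \<in> edges A" "q (qi e2) = e2" unfolding qi_def using bij_inv1[OF q e2] by auto
    have "pi ` ends B e2 = pi ` p ` ends A (qi e2)" using eq e by metis
    also have "\<dots> = id ` ends A (qi e2)" unfolding image_image pi_def
    proof (rule image_cong[OF refl])
      fix x assume "x \<in> ends A (qi e2)"
      hence "x \<in> verts A" using sub e by auto
      thus "the_inv_into (verts A) p (p x) = id x" using bij_inv2[OF p] by simp
    qed
    finally show "ends A (qi e2) = pi ` ends B e2" by simp
  qed
  thus ?thesis unfolding graph_iso_def using pi qi by blast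
qed

lemma copy_nat:
  fixes H :: "('w,'f) mgraph"
  assumes "is_graph H"
  shows "\<exists>Hn :: (nat,nat) mgraph. is_graph Hn \<and> graph_iso H Hn"
proof -
  have fv: "finite (verts H)" and fe: "finite (edges H)" using assms by (auto simp: is_graph_def)
  obtain f :: "'w \<Rightarrow> nat" and n where f: "f ` verts H = {i. i < n}" "inj_on f (verts H)"
    using finite_imp_inj_to_nat_seg[OF fv] by blast
  obtain g :: "'f \<Rightarrow> nat" and m where g: "g ` edges H = {i. i < m}" "inj_on g (edges H)"
    using finite_imp_inj_to_nat_seg[OF fe] by blast
  define Hn :: "(nat,nat) mgraph" where
    "Hn = \<lparr>verts = f ` verts H, edges = g ` edges H, ends = (\<lambda>x. f ` ends H (the_inv_into (edges H) g x))\<rparr>"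
  have en: "\<forall>e\<in>edges H. ends Hn (g e) = f ` ends H e" using g(2) by (simp add: Hn_def the_inv_into_f_f)
  have iso: "graph_iso H Hn" unfolding graph_iso_def using f(2) g(2) en
    by (auto simp: Hn_def bij_betw_def)
  have "is_graph Hn" unfolding is_graph_def
  proof (intro conjI ballI)
    show "finite (verts Hn)" "finite (edges Hn)" using fv fe by (auto simp: Hn_def)
    show "verts Hn \<noteq> {}" using assms by (auto simp: Hn_def is_graph_def)
    fix x assume "x \<in> edges Hn"
    then obtain e where e: "e \<in> edges H" "x = g e" by (auto simp: Hn_def)
    have s: "ends H e \<subseteq> verts H" "card (ends H e) = 2" using assms e by (auto simp: is_graph_def)
    show "ends Hn x \<subseteq> verts Hn" using en e s by (auto simp: Hn_def)
    show "card (ends Hn x) = 2" using en e s card_image[OF inj_on_subset[OF f(2) s(1)]] by simp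
  qed
  thus ?thesis using iso by blast
qed


lemma path_len: "is_path G vs es \<Longrightarrow> finite (verts G) \<Longrightarrow> length vs \<le> card (verts G)"
  unfolding is_path_def by (metis card_mono distinct_card)

lemma usp_fin: "finite (verts G) \<Longrightarrow> finite {length vs | vs es. is_usp G vs es}"
  by (rule finite_subset[of _ "{..card (verts G)}"]) (auto simp: is_usp_def dest: path_len)

lemma usp_single: "x \<in> verts G \<Longrightarrow> is_usp G [x] []"
  unfolding is_usp_def is_path_def
  by (auto simp: Suc_length_conv length_Suc_conv)

lemma usp_ge: "finite (verts G) \<Longrightarrow> is_usp G vs es \<Longrightarrow> length vs \<le> usp G"
  unfolding usp_def by (rule Max_ge[OF usp_fin]) auto

lemma usp_att:
  assumes "finite (verts G)" "verts G \<noteq> {}"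
  shows "\<exists>vs es. is_usp G vs es \<and> length vs = usp G"
proof -
  obtain x where x: "x \<in> verts G" using assms(2) by blast
  have u1: "is_usp G [x] []" by (rule usp_single[OF x])
  have "length [x] \<in> {length vs | vs es. is_usp G vs es}"
    by (rule CollectI, rule exI[of _ "[x]"], rule exI[of _ "[]"]) (simp add: u1)
  hence ne: "{length vs | vs es. is_usp G vs es} \<noteq> {}" by (rule ex_in_conv[THEN iffD1, OF exI])
  have "usp G \<in> {length vs | vs es. is_usp G vs es}" unfolding usp_def by (rule Max_in[OF usp_fin[OF assms(1)] ne])
  then obtain vs es where "usp G = length vs" "is_usp G vs es" by (rule CollectE) (elim exE conjE)
  thus ?thesis by metis
qed

lemma path_map:
  assumes "is_path A vs es" "inj_on f (verts A)" "f ` verts A \<subseteq> verts B" "g ` edges A \<subseteq> edges B"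
    "\<forall>e\<in>edges A. ends B (g e) = f ` ends A e"
  shows "is_path B (map f vs) (map g es)"
  unfolding is_path_def
proof (intro conjI allI impI)
  have p: "vs \<noteq> []" "length vs = Suc (length es)" "distinct vs" "set vs \<subseteq> verts A" "set es \<subseteq> edges A"
    "\<forall>i < length es. ends A (es ! i) = {vs ! i, vs ! Suc i}" using assms(1) unfolding is_path_def by auto
  show "map f vs \<noteq> []" "length (map f vs) = Suc (length (map g es))" using p by auto
  show "distinct (map f vs)" using p assms(2) by (simp add: distinct_map inj_on_subset)
  show "set (map f vs) \<subseteq> verts B" using p(4) assms(3) by (metis image_mono order_trans set_map)
  show "set (map g es) \<subseteq> edges B" using p(5) assms(4) by (metis image_mono order_trans set_map)
  fix i assume i: "i < length (map g es)"
  hence "es ! i \<in> edges A" using p by auto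
  hence "ends B (g (es ! i)) = f ` {vs ! i, vs ! Suc i}" using assms(5) p i by auto
  thus "ends B (map g es ! i) = {map f vs ! i, map f vs ! Suc i}" using i p by simp
qed

lemma usp_iso:
  assumes I: "graph_iso A B" and gA: "is_graph A" and gB: "is_graph B"
  shows "usp A \<le> usp B"
proof -
  from I obtain p q where p: "bij_betw p (verts A) (verts B)" and q: "bij_betw q (edges A) (edges B)"
    and eq: "\<forall>e\<in>edges A. ends B (q e) = p ` ends A e" unfolding graph_iso_def by blast
  have subA: "\<forall>e\<in>edges A. ends A e \<subseteq> verts A" and subB: "\<forall>e\<in>edges B. ends B e \<subseteq> verts B"
    using gA gB by (auto simp: is_graph_def)
  define pi where "pi = the_inv_into (verts A) p"
  define qi where "qi = the_inv_into (edges A) q"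
  have pi: "bij_betw pi (verts B) (verts A)" unfolding pi_def by (rule bij_betw_the_inv_into[OF p])
  have qi: "bij_betw qi (edges B) (edges A)" unfolding qi_def by (rule bij_betw_the_inv_into[OF q])
  have ppi: "\<And>y. y \<in> verts B \<Longrightarrow> p (pi y) = y" unfolding pi_def using bij_inv1[OF p] by auto
  have qqi: "\<And>y. y \<in> edges B \<Longrightarrow> q (qi y) = y" unfolding qi_def using bij_inv1[OF q] by auto
  have pip: "\<And>x. x \<in> verts A \<Longrightarrow> pi (p x) = x" unfolding pi_def using bij_inv2[OF p] by auto
  have eqi: "\<forall>e2\<in>edges B. ends A (qi e2) = pi ` ends B e2"
  proof
    fix e2 assume e2: "e2 \<in> edges B"
    have e: "qi e2 \<in> edges A" "q (qi e2) = e2" unfolding qi_def using bij_inv1[OF q e2] by auto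
    have "pi ` ends B e2 = pi ` p ` ends A (qi e2)" using eq e by metis
    also have "\<dots> = id ` ends A (qi e2)" unfolding image_image
    proof (rule image_cong[OF refl])
      fix x assume "x \<in> ends A (qi e2)"
      hence "x \<in> verts A" using subA e by auto
      thus "pi (p x) = id x" using pip by simp
    qed
    finally show "ends A (qi e2) = pi ` ends B e2" by simp
  qed
  have fA: "finite (verts A)" "verts A \<noteq> {}" and fB: "finite (verts B)" using gA gB by (auto simp: is_graph_def)
  obtain vs es where u: "is_usp A vs es" "length vs = usp A" using usp_att[OF fA] by blast
  have pa: "is_path A vs es" using u by (simp add: is_usp_def)
  have injp: "inj_on p (verts A)" "p ` verts A \<subseteq> verts B" using p by (auto simp: bij_betw_def)
  have injpi: "inj_on pi (verts B)" "pi ` verts B \<subseteq> verts A" using pi by (auto simp: bij_betw_def)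
  have qq: "q ` edges A \<subseteq> edges B" using q by (auto simp: bij_betw_def)
  have qqi': "qi ` edges B \<subseteq> edges A" using qi by (auto simp: bij_betw_def)
  have vsA: "set vs \<subseteq> verts A" "vs \<noteq> []" using pa by (auto simp: is_path_def)
  have pB: "is_path B (map p vs) (map q es)" by (rule path_map[OF pa injp qq eq])
  have key: "length (map p vs) \<le> length vs' \<and> (length vs' = length (map p vs) \<longrightarrow> vs' = map p vs \<and> es' = map q es)"
    if a: "is_path B vs' es' \<and> hd vs' = hd (map p vs) \<and> last vs' = last (map p vs)" for vs' es'
  proof (intro conjI impI)
    have pb: "is_path A (map pi vs') (map qi es')" by (rule path_map[OF _ injpi qqi' eqi]) (use a in simp)
    have ne: "vs' \<noteq> []" "set vs' \<subseteq> verts B" using a by (auto simp: is_path_def)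
    have hA: "hd vs \<in> verts A" "last vs \<in> verts A" using vsA hd_in_set last_in_set by blast+
    have "hd (map pi vs') = pi (hd vs')" using ne(1) by (rule hd_map)
    also have "\<dots> = pi (p (hd vs))" using a vsA(2) by (simp add: hd_map)
    also have "\<dots> = hd vs" using pip[OF hA(1)] .
    finally have h1: "hd (map pi vs') = hd vs" .
    have "last (map pi vs') = pi (last vs')" using ne(1) by (rule last_map)
    also have "\<dots> = pi (p (last vs))" using a vsA(2) by (simp add: last_map)
    also have "\<dots> = last vs" using pip[OF hA(2)] .
    finally have h2: "last (map pi vs') = last vs" .
    have mn: "\<forall>vs' es'. is_path A vs' es' \<and> hd vs' = hd vs \<and> last vs' = last vs \<longrightarrow>
        length vs \<le> length vs'" and
      uq: "\<forall>vs' es'. is_path A vs' es' \<and> hd vs' = hd vs \<and> last vs' = last vs \<and>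
        length vs' = length vs \<longrightarrow> vs' = vs \<and> es' = es" using u(1) unfolding is_usp_def by blast+
    have m: "length vs \<le> length (map pi vs')" using mn[rule_format, OF conjI[OF pb conjI[OF h1 h2]]] .
    have un: "length (map pi vs') = length vs \<Longrightarrow> map pi vs' = vs \<and> map qi es' = es"
      using uq[rule_format, OF conjI[OF pb conjI[OF h1 conjI[OF h2]]]] .
    show "length (map p vs) \<le> length vs'" using m by simp
    assume "length vs' = length (map p vs)"
    hence ee: "map pi vs' = vs" "map qi es' = es" using un by auto
    have "map p vs = map (p \<circ> pi) vs'" using ee(1) by auto
    also have "\<dots> = vs'" by (rule map_idI) (use ne ppi in auto)
    finally show "vs' = map p vs" by simp
    have es'B: "set es' \<subseteq> edges B" using a by (auto simp: is_path_def)
    have "map q es = map (q \<circ> qi) es'" using ee(2) by auto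
    also have "\<dots> = es'" by (rule map_idI) (use es'B qqi in auto)
    finally show "es' = map q es" by simp
  qed
  have "is_usp B (map p vs) (map q es)"
    unfolding is_usp_def
  proof (intro conjI allI impI)
    show "is_path B (map p vs) (map q es)" by (rule pB)
  next
    fix vs' es' assume "is_path B vs' es' \<and> hd vs' = hd (map p vs) \<and> last vs' = last (map p vs)"
    thus "length (map p vs) \<le> length vs'" using key by blast
  next
    fix vs' es' assume "is_path B vs' es' \<and> hd vs' = hd (map p vs) \<and> last vs' = last (map p vs) \<and> length vs' = length (map p vs)"
    thus "vs' = map p vs" "es' = map q es" using key by blast+
  qed
  hence "length (map p vs) \<le> usp B" by (rule usp_ge[OF fB])
  thus ?thesis using u by simp
qed


lemma is_path_Cons:
  "is_path G (a # vs) (e # es) \<longleftrightarrow> vs \<noteq> [] \<and> is_path G vs es \<and> a \<in> verts G \<and> a \<notin> set vs \<and>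
     e \<in> edges G \<and> ends G e = {a, hd vs}"
proof
  assume p: "is_path G (a # vs) (e # es)"
  hence l: "length vs = Suc (length es)" by (simp add: is_path_def)
  hence ne: "vs \<noteq> []" by auto
  have q: "\<forall>i<Suc (length es). ends G ((e # es) ! i) = {(a # vs) ! i, (a # vs) ! Suc i}"
    using p by (simp add: is_path_def)
  have "ends G e = {a, hd vs}" using q[rule_format, of 0] ne by (simp add: hd_conv_nth)
  moreover have "\<forall>i<length es. ends G (es ! i) = {vs ! i, vs ! Suc i}"
    using q by (simp add: All_less_Suc2)
  ultimately show "vs \<noteq> [] \<and> is_path G vs es \<and> a \<in> verts G \<and> a \<notin> set vs \<and>
     e \<in> edges G \<and> ends G e = {a, hd vs}" using p ne l by (simp add: is_path_def)
next
  assume r: "vs \<noteq> [] \<and> is_path G vs es \<and> a \<in> verts G \<and> a \<notin> set vs \<and> e \<in> edges G \<and> ends G e = {a, hd vs}"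
  hence q: "\<forall>i<length es. ends G (es ! i) = {vs ! i, vs ! Suc i}" by (simp add: is_path_def)
  have "\<forall>i<Suc (length es). ends G ((e # es) ! i) = {(a # vs) ! i, (a # vs) ! Suc i}"
    unfolding All_less_Suc2 using q r by (simp add: hd_conv_nth)
  thus "is_path G (a # vs) (e # es)" using r by (simp add: is_path_def)
qed

definition pend :: "('v,'e) mgraph \<Rightarrow> 'v \<Rightarrow> 'e \<Rightarrow> 'v \<Rightarrow> ('v,'e) mgraph" where
  "pend H w \<epsilon> u = \<lparr>verts = insert w (verts H), edges = insert \<epsilon> (edges H), ends = (ends H)(\<epsilon> := {w, u})\<rparr>"

lemma path_up:
  assumes "is_path H vs es" "\<epsilon> \<notin> edges H"
  shows "is_path (pend H w \<epsilon> u) vs es"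
proof -
  have "\<forall>i<length es. es ! i \<noteq> \<epsilon>" using assms unfolding is_path_def by (metis nth_mem subsetD)
  thus ?thesis using assms(1) by (auto simp: is_path_def pend_def)
qed

lemma path_down:
  assumes "is_path (pend H w \<epsilon> u) vs es" "w \<notin> set vs"
  shows "is_path H vs es"
proof -
  have p: "vs \<noteq> []" "length vs = Suc (length es)" "distinct vs" "set vs \<subseteq> insert w (verts H)"
    "set es \<subseteq> insert \<epsilon> (edges H)" "\<forall>i<length es. ends (pend H w \<epsilon> u) (es ! i) = {vs ! i, vs ! Suc i}"
    using assms(1) by (auto simp: is_path_def pend_def)
  have ne: "\<forall>i<length es. es ! i \<noteq> \<epsilon>"
  proof (intro allI impI notI)
    fix i assume i: "i < length es" and "es ! i = \<epsilon>"
    moreover have "ends (pend H w \<epsilon> u) (es ! i) = {vs ! i, vs ! Suc i}" using p(6) i by blast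
    ultimately have "{w, u} = {vs ! i, vs ! Suc i}" by (simp add: pend_def)
    hence "w \<in> {vs ! i, vs ! Suc i}" by (metis insertI1)
    moreover have "vs ! i \<in> set vs" "vs ! Suc i \<in> set vs" using i p(2) by auto
    ultimately show False using assms(2) by blast
  qed
  have "set es \<subseteq> edges H"
  proof
    fix x assume "x \<in> set es"
    then obtain i where "i < length es" "x = es ! i" by (auto simp: in_set_conv_nth)
    thus "x \<in> edges H" using ne p(5) by (metis insertE nth_mem subsetD)
  qed
  moreover have "set vs \<subseteq> verts H" using p(4) assms(2) by auto
  moreover have "\<forall>i<length es. ends H (es ! i) = {vs ! i, vs ! Suc i}" using p(6) ne by (auto simp: pend_def)
  ultimately show ?thesis using p by (simp add: is_path_def)
qed

lemma pend_usp:
  assumes g: "is_graph H" and w: "w \<notin> verts H" and eps: "\<epsilon> \<notin> edges H" and u: "is_usp H vs es"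
  shows "is_usp (pend H w \<epsilon> (hd vs)) (w # vs) (\<epsilon> # es)"
proof -
  let ?P = "pend H w \<epsilon> (hd vs)"
  have pa: "is_path H vs es" using u by (simp add: is_usp_def)
  have ne: "vs \<noteq> []" "set vs \<subseteq> verts H" using pa by (auto simp: is_path_def)
  have sub: "\<forall>e\<in>edges H. ends H e \<subseteq> verts H" using g by (auto simp: is_graph_def)
  have pP: "is_path ?P (w # vs) (\<epsilon> # es)"
    unfolding is_path_Cons using ne w path_up[OF pa eps] by (auto simp: pend_def)
  have key: "length (w # vs) \<le> length vs' \<and> (length vs' = length (w # vs) \<longrightarrow> vs' = w # vs \<and> es' = \<epsilon> # es)"
    if a: "is_path ?P vs' es'" "hd vs' = w" "last vs' = last (w # vs)" for vs' es'
  proof -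
    have "vs' \<noteq> []" using a by (simp add: is_path_def)
    then obtain vs1 where v1: "vs' = w # vs1" using a(2) by (cases vs') auto
    have lastv: "last vs \<in> verts H" using ne last_in_set by blast
    have "vs1 \<noteq> []" using a(3) v1 ne w lastv by auto
    then obtain e es1 where e1: "es' = e # es1" using a(1) v1 by (cases es') (auto simp: is_path_def)
    have pc: "is_path ?P vs1 es1" "w \<notin> set vs1" "e \<in> insert \<epsilon> (edges H)" "ends ?P e = {w, hd vs1}" "vs1 \<noteq> []"
      using a(1) unfolding v1 e1 is_path_Cons by (auto simp: pend_def)
    have "e = \<epsilon>"
    proof (rule ccontr)
      assume "e \<noteq> \<epsilon>"
      hence "e \<in> edges H" "ends H e = {w, hd vs1}" using pc by (auto simp: pend_def)
      thus False using sub w by auto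
    qed
    hence "{w, hd vs} = {w, hd vs1}" using pc(4) by (simp add: pend_def)
    moreover have "hd vs1 \<noteq> w" using pc(2,5) hd_in_set by metis
    ultimately have h: "hd vs1 = hd vs" by (auto simp: doubleton_eq_iff)
    have pH: "is_path H vs1 es1" by (rule path_down[OF pc(1,2)])
    have l: "last vs1 = last vs" using a(3) v1 ne pc(5) by simp
    have "length vs \<le> length vs1" using u pH h l unfolding is_usp_def by blast
    moreover have "length vs1 = length vs \<longrightarrow> vs1 = vs \<and> es1 = es" using u pH h l unfolding is_usp_def by blast
    ultimately show ?thesis using v1 e1 \<open>e = \<epsilon>\<close> by auto
  qed
  show ?thesis unfolding is_usp_def
  proof (intro conjI allI impI)
    show "is_path ?P (w # vs) (\<epsilon> # es)" by (rule pP)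
  next
    fix vs' es' assume A: "is_path ?P vs' es' \<and> hd vs' = hd (w # vs) \<and> last vs' = last (w # vs)"
    hence "is_path ?P vs' es'" "hd vs' = w" "last vs' = last (w # vs)" by simp_all
    from key[OF this] show "length (w # vs) \<le> length vs'" by simp
  next
    fix vs' es' assume A: "is_path ?P vs' es' \<and> hd vs' = hd (w # vs) \<and> last vs' = last (w # vs) \<and> length vs' = length (w # vs)"
    hence "is_path ?P vs' es'" "hd vs' = w" "last vs' = last (w # vs)" by simp_all
    from key[OF this] A show "vs' = w # vs" "es' = \<epsilon> # es" by simp_all
  qed
qed


lemma key:
  fixes H :: "('w,'f) mgraph" and G :: "('a,'b) mgraph"
  assumes gH: "is_graph H" and M: "is_minor G H" and v: "v \<notin> verts G"
  shows "\<exists>Hp::(nat,nat) mgraph. is_graph Hp \<and> card (verts Hp) = card (verts H) + 1 \<and> sp Hp \<le> sp H \<and>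
           is_minor (add_iso G v) Hp"
proof -
  obtain Hn :: "(nat,nat) mgraph" where gn: "is_graph Hn" and I: "graph_iso H Hn" using copy_nat[OF gH] by blast
  from I obtain f g where f: "bij_betw f (verts H) (verts Hn)" and g: "bij_betw g (edges H) (edges Hn)"
    and en: "\<forall>e\<in>edges H. ends Hn (g e) = f ` ends H e" unfolding graph_iso_def by blast
  have cn: "card (verts Hn) = card (verts H)" using f by (simp add: bij_betw_same_card)
  have uu: "usp H \<le> usp Hn" by (rule usp_iso[OF I gH gn])
  have fn: "finite (verts Hn)" "verts Hn \<noteq> {}" "finite (edges Hn)" using gn by (auto simp: is_graph_def)
  have subn: "\<forall>e\<in>edges Hn. ends Hn e \<subseteq> verts Hn \<and> card (ends Hn e) = 2" using gn by (simp add: is_graph_def)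
  have subH: "\<forall>e\<in>edges H. ends H e \<subseteq> verts H" using gH by (simp add: is_graph_def)
  obtain vs es where u: "is_usp Hn vs es" "length vs = usp Hn" using usp_att[OF fn(1,2)] by blast
  obtain w :: nat where w: "w \<notin> verts Hn" using ex_new_if_finite[OF infinite_UNIV_nat fn(1)] by blast
  obtain \<epsilon> :: nat where eps: "\<epsilon> \<notin> edges Hn" using ex_new_if_finite[OF infinite_UNIV_nat fn(3)] by blast
  define Hp where "Hp = pend Hn w \<epsilon> (hd vs)"
  have pa: "is_path Hn vs es" using u by (simp add: is_usp_def)
  have hv: "hd vs \<in> verts Hn" using pa hd_in_set unfolding is_path_def by blast
  have wh: "w \<noteq> hd vs" using w hv by blast
  have gp: "is_graph Hp" unfolding is_graph_def
  proof (intro conjI ballI)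
    show "finite (verts Hp)" "verts Hp \<noteq> {}" "finite (edges Hp)" using fn by (simp_all add: Hp_def pend_def)
    fix e assume e: "e \<in> edges Hp"
    show "ends Hp e \<subseteq> verts Hp"
    proof (cases "e = \<epsilon>")
      case True thus ?thesis using hv by (auto simp: Hp_def pend_def)
    next
      case False thus ?thesis using e subn by (auto simp: Hp_def pend_def)
    qed
    show "card (ends Hp e) = 2"
    proof (cases "e = \<epsilon>")
      case True thus ?thesis using wh by (simp add: Hp_def pend_def)
    next
      case False thus ?thesis using e subn by (simp add: Hp_def pend_def)
    qed
  qed
  have cp: "card (verts Hp) = card (verts H) + 1" using w fn cn by (simp add: Hp_def pend_def)
  have "is_usp Hp (w # vs) (\<epsilon> # es)" unfolding Hp_def by (rule pend_usp[OF gn w eps u(1)])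
  hence "length (w # vs) \<le> usp Hp" using gp by (intro usp_ge) (simp_all add: is_graph_def)
  hence up: "usp Hn + 1 \<le> usp Hp" using u(2) by simp
  have spl: "sp Hp \<le> sp H" unfolding sp_def using cp up uu by linarith
  from M obtain H1 where s: "minor_step\<^sup>*\<^sup>* H H1" and I1: "graph_iso H1 G" unfolding is_minor_def by blast
  have R: "RelW H (del_edge Hp \<epsilon>) w" unfolding RelW_def
  proof (intro conjI exI)
    show "w \<in> verts (del_edge Hp \<epsilon>)" by (simp add: Hp_def pend_def del_edge_def)
    show "\<forall>e\<in>edges H. ends H e \<subseteq> verts H" by (rule subH)
    have "verts (del_edge Hp \<epsilon>) - {w} = verts Hn" using w by (auto simp: Hp_def pend_def del_edge_def)
    thus "bij_betw f (verts H) (verts (del_edge Hp \<epsilon>) - {w})" using f by simp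
    have "edges (del_edge Hp \<epsilon>) = edges Hn" using eps by (auto simp: Hp_def pend_def del_edge_def)
    thus "bij_betw g (edges H) (edges (del_edge Hp \<epsilon>))" using g by simp
    show "\<forall>e\<in>edges H. ends (del_edge Hp \<epsilon>) (g e) = f ` ends H e"
    proof
      fix e assume e: "e \<in> edges H"
      hence "g e \<in> edges Hn" using g by (auto simp: bij_betw_def)
      hence "g e \<noteq> \<epsilon>" using eps by auto
      thus "ends (del_edge Hp \<epsilon>) (g e) = f ` ends H e" using en e by (simp add: Hp_def pend_def del_edge_def)
    qed
  qed
  obtain H2 where s2: "minor_step\<^sup>*\<^sup>* (del_edge Hp \<epsilon>) H2" "RelW H1 H2 w" using sim_steps[OF s R] by blast
  have i2: "graph_iso H2 (add_iso G v)" by (rule iso_final[OF s2(2) I1 v])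
  have "minor_step Hp (del_edge Hp \<epsilon>)" by (rule minor_step.del_e) (simp add: Hp_def pend_def)
  hence "minor_step\<^sup>*\<^sup>* Hp H2" using s2(1) by (rule converse_rtranclp_into_rtranclp)
  hence "is_minor (add_iso G v) Hp" using i2 unfolding is_minor_def by blast
  thus ?thesis using gp cp spl by blast
qed

lemma spfloor_le:
  fixes H :: "(nat,nat) mgraph"
  assumes "is_graph H" "is_minor X H"
  shows "spfloor X \<le> sp H"
proof -
  have "sp H \<in> {sp H | H :: (nat, nat) mgraph. is_graph H \<and> is_minor X H}" using assms by blast
  thus ?thesis unfolding spfloor_def by (rule cInf_lower) simp
qed

lemma spfloor_att:
  assumes g: "is_graph X"
  shows "\<exists>H :: (nat,nat) mgraph. is_graph H \<and> is_minor X H \<and> spfloor X = sp H"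
proof -
  obtain Hn :: "(nat,nat) mgraph" where gn: "is_graph Hn" and I: "graph_iso X Hn" using copy_nat[OF g] by blast
  have "graph_iso Hn X" by (rule iso_sym[OF I]) (use g in \<open>simp add: is_graph_def\<close>)
  hence "is_minor X Hn" unfolding is_minor_def by blast
  hence "{sp H | H :: (nat, nat) mgraph. is_graph H \<and> is_minor X H} \<noteq> {}" using gn by blast
  hence "spfloor X \<in> {sp H | H :: (nat, nat) mgraph. is_graph H \<and> is_minor X H}"
    unfolding spfloor_def by (rule Inf_nat_def1)
  thus ?thesis by blast
qed

theorem lemma2p3:
  fixes Gv :: "('v, 'e) mgraph" and v :: 'v
  assumes "is_graph Gv" and "isolated Gv v" and "verts Gv \<noteq> {v}"
  shows "spfloor Gv = spfloor (del_vertex Gv v) \<and>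
    (\<forall>H :: ('w, 'f) mgraph. is_graph H \<and> is_minor (del_vertex Gv v) H \<and>
        spfloor (del_vertex Gv v) = sp H \<longrightarrow>
      (\<exists>Hp :: (nat, nat) mgraph. is_graph Hp \<and> card (verts Hp) = card (verts H) + 1 \<and>
         spfloor Gv = sp Hp \<and> is_minor Gv Hp))"
proof -
  define G where "G = del_vertex Gv v"
  have vG: "v \<in> verts Gv" and iso: "\<forall>e\<in>edges Gv. v \<notin> ends Gv e" using assms(2) by (auto simp: isolated_def)
  have addG: "add_iso G v = Gv" unfolding G_def add_iso_def del_vertex_def using vG by (simp add: insert_absorb)
  have vn: "v \<notin> verts G" by (simp add: G_def del_vertex_def)
  have gG: "is_graph G" unfolding is_graph_def
  proof (intro conjI ballI)
    show "finite (verts G)" "finite (edges G)" using assms(1) by (simp_all add: G_def del_vertex_def is_graph_def)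
    show "verts G \<noteq> {}" using assms(3) vG by (auto simp: G_def del_vertex_def)
    fix e assume e: "e \<in> edges G"
    hence e': "e \<in> edges Gv" by (simp add: G_def del_vertex_def)
    show "ends G e \<subseteq> verts G" using e' iso assms(1) by (auto simp: G_def del_vertex_def is_graph_def)
    show "card (ends G e) = 2" using e' assms(1) by (simp add: G_def del_vertex_def is_graph_def)
  qed
  have a: "spfloor Gv \<le> spfloor G"
  proof -
    obtain H0 :: "(nat,nat) mgraph" where h0: "is_graph H0" "is_minor G H0" "spfloor G = sp H0"
      using spfloor_att[OF gG] by blast
    obtain Hp :: "(nat,nat) mgraph" where hp: "is_graph Hp" "sp Hp \<le> sp H0" "is_minor (add_iso G v) Hp"
      using key[OF h0(1,2) vn] by blast
    have "spfloor Gv \<le> sp Hp" using spfloor_le[OF hp(1)] hp(3) addG by simp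
    thus ?thesis using hp(2) h0(3) by simp
  qed
  have b: "spfloor G \<le> spfloor Gv"
  proof -
    obtain H1 :: "(nat,nat) mgraph" where h1: "is_graph H1" "is_minor Gv H1" "spfloor Gv = sp H1"
      using spfloor_att[OF assms(1)] by blast
    have "is_minor G H1" unfolding G_def by (rule minor_del[OF h1(2) assms(2)])
    thus ?thesis using spfloor_le[OF h1(1)] h1(3) by simp
  qed
  have eq: "spfloor Gv = spfloor G" using a b by simp
  have part2: "\<forall>H :: ('w, 'f) mgraph. is_graph H \<and> is_minor G H \<and> spfloor G = sp H \<longrightarrow>
      (\<exists>Hp :: (nat, nat) mgraph. is_graph Hp \<and> card (verts Hp) = card (verts H) + 1 \<and>
         spfloor Gv = sp Hp \<and> is_minor Gv Hp)"
  proof (intro allI impI)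
    fix H :: "('w, 'f) mgraph"
    assume h: "is_graph H \<and> is_minor G H \<and> spfloor G = sp H"
    obtain Hp :: "(nat,nat) mgraph" where hp: "is_graph Hp" "card (verts Hp) = card (verts H) + 1"
      "sp Hp \<le> sp H" "is_minor (add_iso G v) Hp"
      using key[of H G v] h vn by blast
    have m: "is_minor Gv Hp" using hp(4) addG by simp
    have "spfloor Gv \<le> sp Hp" by (rule spfloor_le[OF hp(1) m])
    hence "spfloor Gv = sp Hp" using hp(3) h eq by simp
    thus "\<exists>Hp :: (nat, nat) mgraph. is_graph Hp \<and> card (verts Hp) = card (verts H) + 1 \<and>
         spfloor Gv = sp Hp \<and> is_minor Gv Hp" using hp(1,2) m by blast
  qed
  show ?thesis using eq part2 unfolding G_def by blast
qed

end
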